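(* Let $N,T\ge1$, $\boldsymbol E\in\mathbb{C}^{N\times T}$, $H(x,\boldsymbol y)=\|\boldsymbol E-\boldsymbol a(x)\boldsymbol y^H\|_F^2$, and let $L:\mathbb C^T\to(0,\infty)$ be such that Assumption A holds. Let $\{\boldsymbol z^k\}=\{(x^k,\boldsymbol y^k)\}$ be generated by the cubic-regularized alternating scheme from $\boldsymbol z^0$, and assume this sequence is bounded. Let $\omega(\boldsymbol z^0)$ be the set of all $\bar{\boldsymbol z}\in\mathbb R\times\mathbb C^T$ for which there is an increasing sequence of integers $\{k_l\}$ with $\boldsymbol z^{k_l}\to\bar{\boldsymbol z}$. Then: (i) $\omega(\boldsymbol z^0)$ is nonempty and $\omega(\boldsymbol z^0)\subseteq\operatorname{crit}H:=\{\boldsymbol z:\nabla_{\boldsymbol z}H(\boldsymbol z)=0\}$; (ii) $\lim_{k\to\infty}\operatorname{dist}(\boldsymbol z^k,\omega(\boldsymbol z^0))=0$.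
   Context: Steering vector: $\boldsymbol a(x)=\frac{1}{\sqrt N}[1,e^{jx},\dots,e^{j(N-1)x}]^T$ for $x\in\mathbb R$. Cubic-regularized alternating scheme: given $H:\mathbb{R}\times\mathbb{C}^T\to\mathbb{R}$, a function $L:\mathbb{C}^T\to(0,\infty)$ and an initial point $(x^0,\boldsymbol y^0)$, for $k\ge0$ define $$\xi_k(x)=\partial_x H(x^k,\boldsymbol y^k)(x-x^k)+\tfrac12\,\partial^2_{xx}H(x^k,\boldsymbol y^k)(x-x^k)^2+\tfrac{L(\boldsymbol y^k)}{6}|x-x^k|^3,$$ $$x^{k+1}\in\arg\min_{x\in\mathbb R}\xi_k(x),\qquad \boldsymbol y^{k+1}\in\arg\min_{\boldsymbol y\in\mathbb{C}^T}H(x^{k+1},\boldsymbol y),$$ and write $\boldsymbol z^k=(x^k,\boldsymbol y^k)$. Assumption A: (i) $H$ is bounded below. (ii) For every fixed $\boldsymbol y$, $x\mapsto H(x,\boldsymbol y)$ is twice continuously differentiable with $|\partial^2_{xx}H(x_1,\boldsymbol y)-\partial^2_{xx}H(x_2,\boldsymbol y)|\le L(\boldsymbol y)|x_1-x_2|$. (iii) There is $\nu>0$ such that for every fixed $x$, $\boldsymbol y\mapsto H(x,\boldsymbol y)-\frac{\nu}{2}\|\boldsymbol y\|^2$ is convex on $\mathbb C^T\cong\mathbb R^{2T}$. (iv) There exist $0<\lambda^-\le\lambda^+$ with $\lambda^-\le L(\boldsymbol y^k)\le\lambda^+$ for all $k$. $\nabla_{\boldsymbol z}H=(\partial_xH,\nabla_{\boldsymbol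 y}H)$ with $\nabla_{\boldsymbol y}$ the Wirtinger gradient with respect to $\boldsymbol y$; $\operatorname{dist}(\boldsymbol z,S)=\inf_{\boldsymbol s\in S}\|\boldsymbol z-\boldsymbol s\|$. *)

theory Defs
  imports "HOL-Analysis.Analysis"
begin

definition steer :: "nat \<Rightarrow> nat \<Rightarrow> real \<Rightarrow> complex" where
  "steer N i x = exp (\<i> * of_nat i * complex_of_real x) / complex_of_real (sqrt (real N))"

text \<open>H(x,y) = ||E - a(x) y^H||_F^2; E is given by its rows E 0, ..., E (N-1) in C^T.\<close>
definition Hobj :: "nat \<Rightarrow> (nat \<Rightarrow> complex ^ 't) \<Rightarrow> real \<Rightarrow> complex ^ 't \<Rightarrow> real" where
  "Hobj N E x y = (\<Sum>i<N. \<Sum>t\<in>UNIV. (cmod (E i $ t - steer N i x * cnj (y $ t)))\<^sup>2)"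

text \<open>Wirtinger (conjugate) gradient of a real-valued function on C^T:
  component t is (1/2)(d f/d Re y_t + j d f/d Im y_t).\<close>
definition wirtinger_grad :: "(complex ^ 't \<Rightarrow> real) \<Rightarrow> complex ^ 't \<Rightarrow> complex ^ 't" where
  "wirtinger_grad f y = (\<chi> t. (1/2) *
      (complex_of_real (deriv (\<lambda>s. f (y + s *\<^sub>R axis t 1)) 0)
       + \<i> * complex_of_real (deriv (\<lambda>s. f (y + s *\<^sub>R axis t \<i>)) 0)))"

definition dx :: "(real \<Rightarrow> 'b \<Rightarrow> real) \<Rightarrow> real \<Rightarrow> 'b \<Rightarrow> real" where
  "dx H x y = deriv (\<lambda>u. H u y) x"

definition dxx :: "(real \<Rightarrow> 'b \<Rightarrow> real) \<Rightarrow> real \<Rightarrow> 'b \<Rightarrow> real" where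
  "dxx H x y = deriv (\<lambda>u. dx H u y) x"

definition crit :: "(real \<Rightarrow> complex ^ 't \<Rightarrow> real) \<Rightarrow> (real \<times> (complex ^ 't)) set" where
  "crit H = {(x, y). dx H x y = 0 \<and> wirtinger_grad (H x) y = 0}"

definition cubic_model :: "(real \<Rightarrow> 'b \<Rightarrow> real) \<Rightarrow> ('b \<Rightarrow> real) \<Rightarrow> real \<Rightarrow> 'b \<Rightarrow> real \<Rightarrow> real" where
  "cubic_model H L xk yk x = dx H xk yk * (x - xk) + 1/2 * dxx H xk yk * (x - xk)\<^sup>2
      + L yk / 6 * \<bar>x - xk\<bar> ^ 3"

definition omega_limit :: "(nat \<Rightarrow> 'a::topological_space) \<Rightarrow> 'a set" where
  "omega_limit z = {zb. \<exists>r. strict_mono r \<and> (z \<circ> r) \<longlonglongrightarrow> zb}"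

end

theory Submission
  imports Defs
begin

lemma abs3_deriv: "((\<lambda>t::real. \<bar>t\<bar>^3) has_real_derivative (3 * t * \<bar>t\<bar>)) (at t)"
proof (cases "t = 0")
  case True
  have eq: "x' * \<bar>x'\<bar> = (\<bar>0 + x'\<bar> ^ 3 - \<bar>0\<bar> ^ 3) / x'" if "x' \<noteq> 0" for x' :: real
  proof -
    have "\<bar>x'\<bar>^3 = x' * x' * \<bar>x'\<bar>" by (simp add: power3_eq_cube abs_mult_self_eq)
    then show ?thesis using that by simp
  qed
  have "((\<lambda>h::real. (\<bar>0 + h\<bar>^3 - \<bar>0\<bar>^3) / h) \<longlongrightarrow> 0) (at 0)"
  proof (rule Lim_transform_within[where d=1])
    show "((\<lambda>h::real. h * \<bar>h\<bar>) \<longlongrightarrow> 0) (at 0)"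
      by (rule tendsto_eq_intros | simp)+
  qed (use eq in auto)
  then show ?thesis using True by (simp add: DERIV_def)
next
  case False
  show ?thesis
  proof (cases "t > 0")
    case True
    have "((\<lambda>t::real. t^3) has_real_derivative (3 * t * \<bar>t\<bar>)) (at t)"
      using True by (auto intro!: derivative_eq_intros simp: power2_eq_square)
    then show ?thesis
      apply (rule has_field_derivative_transform_within_open[where S="{0<..}"])
      using True by auto
  next
    case f: False
    have "((\<lambda>t::real. -(t^3)) has_real_derivative (3 * t * \<bar>t\<bar>)) (at t)"
      using f False by (auto intro!: derivative_eq_intros simp: power2_eq_square)
    then show ?thesis
      apply (rule has_field_derivative_transform_within_open[where S="{..<0}"])
      using f False by auto
  qed
qed



lemma cubic_min:
  fixes g M L x0 x1 :: real
  assumes min: "\<And>x. g*(x1-x0) + 1/2*M*(x1-x0)^2 + L/6*\<bar>x1-x0\<bar>^3 \<le> g*(x-x0) + 1/2*M*(x-x0)^2 + L/6*\<bar>x-x0\<bar>^3"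
  shows "g + M*(x1-x0) + L/2*(x1-x0)*\<bar>x1-x0\<bar> = 0"
    and "g*(x1-x0) + 1/2*M*(x1-x0)^2 + L/6*\<bar>x1-x0\<bar>^3 \<le> - L/12*\<bar>x1-x0\<bar>^3"
proof -
  define f where "f = (\<lambda>x. g*(x-x0) + 1/2*M*(x-x0)^2 + L/6*\<bar>x-x0\<bar>^3)"
  have d: "(f has_real_derivative (g + M*(x1-x0) + L/2*(x1-x0)*\<bar>x1-x0\<bar>)) (at x1)"
  proof -
    have a: "((\<lambda>x. \<bar>x-x0\<bar>^3) has_real_derivative (3*(x1-x0)*\<bar>x1-x0\<bar>) * 1) (at x1)"
      by (rule DERIV_chain2[OF abs3_deriv]) (auto intro!: derivative_eq_intros)
    have b: "((\<lambda>x. g*(x-x0) + 1/2*M*(x-x0)^2) has_real_derivative (g + M*(x1-x0))) (at x1)"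
      by (auto intro!: derivative_eq_intros simp: field_simps)
    show ?thesis unfolding f_def
      by (rule DERIV_cong[OF DERIV_add[OF b DERIV_cmult[OF a, of "L/6"]]]) (simp add: field_simps)
  qed
  show st: "g + M*(x1-x0) + L/2*(x1-x0)*\<bar>x1-x0\<bar> = 0"
    by (rule DERIV_local_min[OF d, of 1]) (use min in \<open>auto simp: f_def\<close>)
  define h where "h = x1 - x0"
  have "g*h + 1/2*M*h^2 + L/6*\<bar>h\<bar>^3 \<le> g*(-h) + 1/2*M*(-h)^2 + L/6*\<bar>-h\<bar>^3"
    using min[of "x0 - h"] by (simp add: h_def)
  then have gh: "g*h \<le> 0" by simp
  have "h * (g + M*h + L/2*h*\<bar>h\<bar>) = 0" using st by (simp add: h_def)
  then have "g*h + M*h^2 + L/2*\<bar>h\<bar>^3 = 0"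
    by (simp add: algebra_simps power2_eq_square power3_eq_cube abs_mult_self_eq)
  then show "g*(x1-x0) + 1/2*M*(x1-x0)^2 + L/6*\<bar>x1-x0\<bar>^3 \<le> - L/12*\<bar>x1-x0\<bar>^3"
    using gh unfolding h_def[symmetric] by linarith
qed



lemma taylor_lip:
  fixes f f' f'' :: "real \<Rightarrow> real"
  assumes d1: "\<And>x. (f has_real_derivative f' x) (at x)"
      and d2: "\<And>x. (f' has_real_derivative f'' x) (at x)"
      and lip: "\<And>x. \<bar>f'' x - f'' x0\<bar> \<le> L * \<bar>x - x0\<bar>"
  shows "f x \<le> f x0 + f' x0*(x-x0) + 1/2*f'' x0*(x-x0)^2 + L/6*\<bar>x-x0\<bar>^3"
proof (cases "x0 \<le> x")
  case True
  define Q where "Q = (\<lambda>t. L/2*(t-x0)^2 - (f' t - f' x0 - f'' x0*(t-x0)))"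
  have Qd: "(Q has_real_derivative (L*(t-x0) - (f'' t - f'' x0))) (at t)" for t
    unfolding Q_def by (auto intro!: derivative_eq_intros d2 simp: field_simps)
  have l1: "f'' s - f'' x0 \<le> L*(s-x0)" if "x0 \<le> s" for s
    using lip[of s] that by (simp add: abs_le_iff)
  have Qnn: "0 \<le> Q t" if "x0 \<le> t" for t
  proof -
    have "Q x0 \<le> Q t"
      by (rule deriv_nonneg_imp_mono[OF Qd]) (use l1 that in \<open>auto\<close>)
    then show ?thesis by (simp add: Q_def)
  qed
  define P where "P = (\<lambda>t. L/6*(t-x0)^3 - (f t - f x0 - f' x0*(t-x0) - 1/2*f'' x0*(t-x0)^2))"
  have Pd: "(P has_real_derivative Q t) (at t)" for t
    unfolding P_def Q_def by (auto intro!: derivative_eq_intros d1 simp: field_simps power2_eq_square)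
  have "P x0 \<le> P x"
    by (rule deriv_nonneg_imp_mono[OF Pd]) (use Qnn True in auto)
  moreover have "\<bar>x-x0\<bar>^3 = (x-x0)^3" using True by simp
  ultimately show ?thesis by (simp add: P_def)
next
  case False
  define Q where "Q = (\<lambda>t. f' t - f' x0 - f'' x0*(t-x0) + L/2*(t-x0)^2)"
  have Qd: "(Q has_real_derivative ((f'' t - f'' x0) + L*(t-x0))) (at t)" for t
    unfolding Q_def by (auto intro!: derivative_eq_intros d2 simp: field_simps)
  have l1: "f'' s - f'' x0 \<le> L*(x0-s)" if "s \<le> x0" for s
    using lip[of s] that by (simp add: abs_le_iff)
  have Qnn: "0 \<le> Q t" if "t \<le> x0" for t
  proof -
    have "Q x0 \<le> Q t"
      by (rule deriv_nonpos_imp_antimono[OF Qd]) (use l1 that in \<open>force simp: algebra_simps\<close>)+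
    then show ?thesis by (simp add: Q_def)
  qed
  define P where "P = (\<lambda>t. - L/6*(t-x0)^3 - (f t - f x0 - f' x0*(t-x0) - 1/2*f'' x0*(t-x0)^2))"
  have Pd: "(P has_real_derivative - Q t) (at t)" for t
    unfolding P_def Q_def by (auto intro!: derivative_eq_intros d1 simp: field_simps power2_eq_square)
  have "P x0 \<le> P x"
    by (rule deriv_nonpos_imp_antimono[OF Pd]) (use Qnn False in auto)
  moreover have "\<bar>x-x0\<bar>^3 = -((x-x0)^3)" using False
    by (simp add: abs_if power3_eq_cube algebra_simps)
  ultimately show ?thesis by (simp add: P_def)
qed



definition trig0 :: "real \<Rightarrow> real \<Rightarrow> nat \<Rightarrow> real \<Rightarrow> real" where
  "trig0 \<alpha> \<beta> i x = \<alpha> * cos (i*x) + \<beta> * sin (i*x)"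

lemma trig0_deriv: "((\<lambda>x. trig0 \<alpha> \<beta> i x) has_real_derivative trig0 (\<beta>*i) (-\<alpha>*i) i x) (at x)"
  unfolding trig0_def by (auto intro!: derivative_eq_intros simp: algebra_simps)

definition hterm :: "complex \<Rightarrow> complex \<Rightarrow> nat \<Rightarrow> nat \<Rightarrow> real \<Rightarrow> real" where
  "hterm e w i N x = (cmod e)^2 + (cmod w)^2 / N - 2 / sqrt N * trig0 (Re (e*w)) (Im (e*w)) i x"

definition d1term :: "complex \<Rightarrow> complex \<Rightarrow> nat \<Rightarrow> nat \<Rightarrow> real \<Rightarrow> real" where
  "d1term e w i N x = - (2 / sqrt N * trig0 (Im (e*w) * i) (- Re (e*w) * i) i x)"

definition d2term :: "complex \<Rightarrow> complex \<Rightarrow> nat \<Rightarrow> nat \<Rightarrow> real \<Rightarrow> real" where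
  "d2term e w i N x = - (2 / sqrt N * trig0 (- Re (e*w) * i * i) (- Im (e*w) * i * i) i x)"

lemma steer_eq: "steer N i x = Complex (cos (i*x) / sqrt N) (sin (i*x) / sqrt N)"
proof -
  have "\<i> * of_nat i * complex_of_real x = \<i> * complex_of_real (i*x)" by simp
  then have "exp (\<i> * of_nat i * complex_of_real x) = cis (i*x)" by (simp add: cis_conv_exp mult.assoc)
  then show ?thesis unfolding steer_def by (simp add: complex_eq_iff cis.sel Re_divide_of_real Im_divide_of_real)
qed

lemma alg:
  fixes a b c d C S r :: real
  assumes r: "r > 0" and sc: "S^2 + C^2 = 1"
  shows "(a - (C/r*c + S/r*d))^2 + (b - (S/r*c - C/r*d))^2 = a^2+b^2 + (c^2+d^2)/r^2 - 2/r*((a*c - b*d)*C + (a*d+b*c)*S)"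
proof -
  have k: "(C*c+S*d)^2 + (S*c - C*d)^2 = (c^2+d^2)*(S^2+C^2)" by algebra
  have "(a - (C/r*c + S/r*d))^2 + (b - (S/r*c - C/r*d))^2
      = a^2+b^2 + ((C*c+S*d)^2 + (S*c - C*d)^2)/r^2 - 2/r*((a*c - b*d)*C + (a*d+b*c)*S)"
    using r by (simp add: field_simps power2_eq_square)
  then show ?thesis using k sc by simp
qed

lemma term_eq:
  assumes "N \<ge> 1"
  shows "(cmod (e - steer N i x * cnj w))^2 = hterm e w i N x"
proof -
  have sN: "sqrt (real N) ^ 2 = N" using assms by simp
  have sN0: "sqrt (real N) > 0" using assms by simp
  have sc: "(sin (i*x))^2 + (cos (i*x))^2 = 1" by simp
  obtain a b where e: "e = Complex a b" by (cases e)
  obtain c d where w: "w = Complex c d" by (cases w)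
  have "(cmod (e - steer N i x * cnj w))^2 = (a - (cos (i*x)/sqrt N*c + sin (i*x)/sqrt N*d))^2 + (b - (sin (i*x)/sqrt N*c - cos (i*x)/sqrt N*d))^2"
    unfolding steer_eq e w cmod_power2 by (simp add: algebra_simps)
  also have "\<dots> = a^2+b^2 + (c^2+d^2)/(sqrt N)^2 - 2/sqrt N*((a*c - b*d) * cos (i*x) + (a*d+b*c) * sin (i*x))"
    by (rule alg[OF sN0]) simp
  also have "\<dots> = hterm e w i N x"
    unfolding hterm_def trig0_def e w cmod_power2 using sN by simp
  finally show ?thesis .
qed



lemma hterm_deriv: "((\<lambda>x. hterm e w i N x) has_real_derivative d1term e w i N x) (at x)"
  unfolding hterm_def d1term_def
  by (rule DERIV_cong[OF DERIV_diff[OF DERIV_const DERIV_cmult[OF trig0_deriv]]]) simp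

lemma d1term_deriv: "((\<lambda>x. d1term e w i N x) has_real_derivative d2term e w i N x) (at x)"
  unfolding d2term_def d1term_def
  by (rule DERIV_cong[OF DERIV_minus[OF DERIV_cmult[OF trig0_deriv]]]) (simp add: algebra_simps)

lemma Hobj_eq: "N \<ge> 1 \<Longrightarrow> Hobj N E x y = (\<Sum>i<N. \<Sum>t\<in>UNIV. hterm (E i $ t) (y $ t) i N x)"
  unfolding Hobj_def by (simp add: term_eq)

lemma Hobj_deriv: "N \<ge> 1 \<Longrightarrow> ((\<lambda>u. Hobj N E u y) has_real_derivative (\<Sum>i<N. \<Sum>t\<in>UNIV. d1term (E i $ t) (y $ t) i N x)) (at x)"
  unfolding Hobj_eq by (intro DERIV_sum hterm_deriv)

lemma dx_eq: "N \<ge> 1 \<Longrightarrow> dx (Hobj N E) x y = (\<Sum>i<N. \<Sum>t\<in>UNIV. d1term (E i $ t) (y $ t) i N x)"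
  unfolding dx_def by (rule DERIV_imp_deriv[OF Hobj_deriv])

lemma dxx_eq: "N \<ge> 1 \<Longrightarrow> dxx (Hobj N E) x y = (\<Sum>i<N. \<Sum>t\<in>UNIV. d2term (E i $ t) (y $ t) i N x)"
  unfolding dxx_def dx_eq by (rule DERIV_imp_deriv) (intro DERIV_sum d1term_deriv)

lemma hterm_ydir: "N \<ge> 1 \<Longrightarrow> \<exists>D. ((\<lambda>s. hterm e (p + s *\<^sub>R q) i N x) has_real_derivative D) (at s0)"
  unfolding hterm_def cmod_power2 trig0_def
  by (rule exI) (rule derivative_eq_intros refl | simp)+

lemma Hobj_ydir: "N \<ge> 1 \<Longrightarrow> \<exists>D. ((\<lambda>s. Hobj N E x (y + s *\<^sub>R v)) has_real_derivative D) (at s0)"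
proof -
  assume N: "N \<ge> 1"
  have "\<forall>i t. \<exists>D. ((\<lambda>s. hterm (E i $ t) (y $ t + s *\<^sub>R (v $ t)) i N x) has_real_derivative D) (at s0)"
    using hterm_ydir[OF N] by blast
  then obtain D where D: "\<And>i t. ((\<lambda>s. hterm (E i $ t) (y $ t + s *\<^sub>R (v $ t)) i N x) has_real_derivative D i t) (at s0)"
    by metis
  have "((\<lambda>s. Hobj N E x (y + s *\<^sub>R v)) has_real_derivative (\<Sum>i<N. \<Sum>t\<in>UNIV. D i t)) (at s0)"
    unfolding Hobj_eq[OF N] by (simp add: DERIV_sum D)
  then show ?thesis by blast
qed



lemma Hobj_tendsto: fixes X :: "'b::t2_space \<Rightarrow> real" shows "N \<ge> 1 \<Longrightarrow> (X \<longlongrightarrow> x) F \<Longrightarrow> (Y \<longlongrightarrow> y) F \<Longrightarrow> ((\<lambda>n. Hobj N E (X n) (Y n)) \<longlongrightarrow> Hobj N E x y) F"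
  unfolding Hobj_eq hterm_def trig0_def by (intro tendsto_intros) auto

lemma dx_tendsto: fixes X :: "'b::t2_space \<Rightarrow> real" shows "N \<ge> 1 \<Longrightarrow> (X \<longlongrightarrow> x) F \<Longrightarrow> (Y \<longlongrightarrow> y) F \<Longrightarrow> ((\<lambda>n. dx (Hobj N E) (X n) (Y n)) \<longlongrightarrow> dx (Hobj N E) x y) F"
  unfolding dx_eq d1term_def trig0_def by (intro tendsto_intros)

lemma dxx_tendsto: fixes X :: "'b::t2_space \<Rightarrow> real" shows "N \<ge> 1 \<Longrightarrow> (X \<longlongrightarrow> x) F \<Longrightarrow> (Y \<longlongrightarrow> y) F \<Longrightarrow> ((\<lambda>n. dxx (Hobj N E) (X n) (Y n)) \<longlongrightarrow> dxx (Hobj N E) x y) F"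
  unfolding dxx_eq d2term_def trig0_def by (intro tendsto_intros)

lemma omega_nonempty:
  fixes z :: "nat \<Rightarrow> 'a::heine_borel"
  assumes "bounded (range z)"
  shows "omega_limit z \<noteq> {}"
  using bounded_imp_convergent_subsequence[OF assms] unfolding omega_limit_def by blast

lemma omega_dist:
  fixes z :: "nat \<Rightarrow> 'a::heine_borel"
  assumes bdd: "bounded (range z)"
  shows "(\<lambda>k. infdist (z k) (omega_limit z)) \<longlonglongrightarrow> 0"
proof (rule ccontr)
  define \<phi> where "\<phi> = (\<lambda>k. infdist (z k) (omega_limit z))"
  assume nt: "\<not> (\<lambda>k. infdist (z k) (omega_limit z)) \<longlonglongrightarrow> 0"
  have "\<exists>e>0. infinite {k. e \<le> \<phi> k}"
  proof (rule ccontr)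
    assume "\<not> (\<exists>e>0. infinite {k. e \<le> \<phi> k})"
    then have fin: "\<And>e. e > 0 \<Longrightarrow> finite {k. e \<le> \<phi> k}" by blast
    have "\<phi> \<longlonglongrightarrow> 0"
      unfolding LIMSEQ_iff
    proof (intro allI impI)
      fix e :: real assume "e > 0"
      then obtain m where m: "\<forall>n\<in>{k. e \<le> \<phi> k}. n < m" using fin finite_nat_set_iff_bounded by meson
      show "\<exists>no. \<forall>n\<ge>no. norm (\<phi> n - 0) < e"
      proof (intro exI allI impI)
        fix n assume "m \<le> n"
        then have "\<not> e \<le> \<phi> n" using m by force
        then show "norm (\<phi> n - 0) < e" by (simp add: \<phi>_def infdist_nonneg)
      qed
    qed
    then show False using nt unfolding \<phi>_def by simp
  qed
  then obtain e where e: "e > 0" "infinite {k. e \<le> \<phi> k}" by blast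
  obtain r :: "nat \<Rightarrow> nat" where r: "strict_mono r" "\<And>n. r n \<in> {k. e \<le> \<phi> k}"
    using infinite_enumerate[OF e(2)] by blast
  have "bounded (range (z \<circ> r))" using bdd by (rule bounded_subset) auto
  then obtain l s where s: "strict_mono s" "((z \<circ> r) \<circ> s) \<longlonglongrightarrow> l"
    using bounded_imp_convergent_subsequence by blast
  have lin: "l \<in> omega_limit z"
    unfolding omega_limit_def using s r strict_mono_o[OF r(1) s(1)] by (auto simp: o_assoc)
  have "((\<lambda>n. dist (z (r (s n))) l) \<longlongrightarrow> 0) sequentially"
    using tendsto_dist[OF s(2) tendsto_const[of l]] by (simp add: o_def)
  then have "eventually (\<lambda>n. dist (z (r (s n))) l < e) sequentially"
    by (rule order_tendstoD(2)) (rule e(1))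
  then obtain n where "dist (z (r (s n))) l < e" by (auto simp: eventually_sequentially)
  moreover have "infdist (z (r (s n))) (omega_limit z) \<le> dist (z (r (s n))) l"
    by (rule infdist_le[OF lin])
  moreover have "e \<le> \<phi> (r (s n))" using r(2) by blast
  ultimately show False unfolding \<phi>_def by linarith
qed



theorem theorem1:
  fixes N :: nat and E :: "nat \<Rightarrow> complex ^ 't"
    and L :: "complex ^ 't \<Rightarrow> real"
    and xs :: "nat \<Rightarrow> real" and ys :: "nat \<Rightarrow> complex ^ 't"
  defines "H \<equiv> Hobj N E"
  assumes N_pos: "N \<ge> 1"
    and L_pos: "\<And>y. L y > 0"
    and A1: "bdd_below (range (\<lambda>(x, y). H x y))"
    and A2_d1: "\<And>x y. ((\<lambda>u. H u y) has_real_derivative dx H x y) (at x)"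
    and A2_d2: "\<And>x y. ((\<lambda>u. dx H u y) has_real_derivative dxx H x y) (at x)"
    and A2_cont: "\<And>y. continuous_on UNIV (\<lambda>u. dxx H u y)"
    and A2_lip: "\<And>x1 x2 y. \<bar>dxx H x1 y - dxx H x2 y\<bar> \<le> L y * \<bar>x1 - x2\<bar>"
    and A3: "\<exists>\<nu>>0. \<forall>x. convex_on UNIV (\<lambda>y. H x y - \<nu> / 2 * (norm y)\<^sup>2)"
    and A4: "\<exists>lm lp. 0 < lm \<and> lm \<le> lp \<and> (\<forall>k. lm \<le> L (ys k) \<and> L (ys k) \<le> lp)"
    and step_x: "\<And>k x. cubic_model H L (xs k) (ys k) (xs (Suc k))
                          \<le> cubic_model H L (xs k) (ys k) x"
    and step_y: "\<And>k y. H (xs (Suc k)) (ys (Suc k)) \<le> H (xs (Suc k)) y"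
    and bdd: "bounded (range (\<lambda>k. (xs k, ys k)))"
  shows "omega_limit (\<lambda>k. (xs k, ys k)) \<noteq> {}
         \<and> omega_limit (\<lambda>k. (xs k, ys k)) \<subseteq> crit H
         \<and> (\<lambda>k. infdist (xs k, ys k) (omega_limit (\<lambda>k. (xs k, ys k)))) \<longlonglongrightarrow> 0"
proof -
  from A4 obtain lm lp where lm: "0 < lm" "lm \<le> lp" and Lb: "\<And>k. lm \<le> L (ys k) \<and> L (ys k) \<le> lp"
    by blast
  define h where "h k = xs (Suc k) - xs k" for k
  define g where "g k = dx H (xs k) (ys k)" for k
  define M where "M k = dxx H (xs k) (ys k)" for k
  define F where "F k = H (xs k) (ys k)" for k
  have cm: "g k*(xs (Suc k) - xs k) + 1/2*M k*(xs (Suc k) - xs k)^2 + L (ys k)/6*\<bar>xs (Suc k) - xs k\<bar>^3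
      \<le> g k*(x - xs k) + 1/2*M k*(x - xs k)^2 + L (ys k)/6*\<bar>x - xs k\<bar>^3" for k x
    using step_x[of k x] unfolding cubic_model_def g_def M_def by simp
  have stat: "g k + M k * h k + L (ys k)/2 * h k * \<bar>h k\<bar> = 0" for k
    using cubic_min(1)[OF cm] unfolding h_def by blast
  have dec1: "g k * h k + 1/2*M k*(h k)^2 + L (ys k)/6*\<bar>h k\<bar>^3 \<le> - L (ys k)/12*\<bar>h k\<bar>^3" for k
    using cubic_min(2)[OF cm] unfolding h_def by blast
  have tay: "H (xs (Suc k)) (ys k) \<le> F k + (g k*h k + 1/2*M k*(h k)^2 + L (ys k)/6*\<bar>h k\<bar>^3)" for k
  proof -
    have "H (xs (Suc k)) (ys k) \<le> H (xs k) (ys k) + dx H (xs k) (ys k)*(xs (Suc k) - xs k)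
        + 1/2*dxx H (xs k) (ys k)*(xs (Suc k)-xs k)^2 + L (ys k)/6*\<bar>xs (Suc k) - xs k\<bar>^3"
      by (rule taylor_lip[where f="\<lambda>u. H u (ys k)" and f'="\<lambda>u. dx H u (ys k)" and f''="\<lambda>u. dxx H u (ys k)"])
        (use A2_d1 A2_d2 A2_lip in auto)
    then show ?thesis unfolding F_def g_def M_def h_def by simp
  qed
  have hnn: "0 \<le> lm/12*\<bar>h k\<bar>^3" for k using lm by simp
  have desc: "F (Suc k) \<le> F k - lm/12*\<bar>h k\<bar>^3" for k
  proof -
    have "F (Suc k) \<le> H (xs (Suc k)) (ys k)" using step_y unfolding F_def by blast
    moreover have "lm/12*\<bar>h k\<bar>^3 \<le> L (ys k)/12*\<bar>h k\<bar>^3" using Lb[of k]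
      by (intro mult_right_mono divide_right_mono) auto
    ultimately show ?thesis using tay[of k] dec1[of k] by linarith
  qed
  have Fnn: "0 \<le> F k" for k unfolding F_def H_def Hobj_def by (intro sum_nonneg) auto
  have "decseq F"
  proof (rule decseq_SucI)
    fix k show "F (Suc k) \<le> F k" using desc[of k] hnn[of k] by linarith
  qed
  then obtain Fl where Fl: "F \<longlonglongrightarrow> Fl" using decseq_convergent[of F 0] Fnn by blast
  have "(\<lambda>k. F k - F (Suc k)) \<longlonglongrightarrow> Fl - Fl"
    by (intro tendsto_diff Fl LIMSEQ_Suc)
  then have d0: "(\<lambda>k. F k - F (Suc k)) \<longlonglongrightarrow> 0" by simp
  have Fd: "(\<lambda>k. 12/lm * (F k - F (Suc k))) \<longlonglongrightarrow> 0"
    by (rule tendsto_mult_right_zero[OF d0])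
  have h3: "(\<lambda>k. \<bar>h k\<bar>^3) \<longlonglongrightarrow> 0"
  proof (rule tendsto_sandwich[OF _ _ tendsto_const Fd])
    show "\<forall>\<^sub>F k in sequentially. 0 \<le> \<bar>h k\<bar>^3" by simp
    show "\<forall>\<^sub>F k in sequentially. \<bar>h k\<bar>^3 \<le> 12/lm * (F k - F (Suc k))"
    proof (intro always_eventually allI)
      fix k
      have "lm/12*\<bar>h k\<bar>^3 \<le> F k - F (Suc k)" using desc[of k] by simp
      then show "\<bar>h k\<bar>^3 \<le> 12/lm * (F k - F (Suc k))" using lm by (simp add: field_simps)
    qed
  qed
  have "(\<lambda>k. root 3 (\<bar>h k\<bar>^3)) \<longlonglongrightarrow> root 3 0" by (rule tendsto_real_root[OF h3])
  moreover have r3: "root 3 (\<bar>h k\<bar>^3) = \<bar>h k\<bar>" for k by (rule real_root_power_cancel) auto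
  ultimately have "(\<lambda>k. \<bar>h k\<bar>) \<longlonglongrightarrow> 0" by simp
  then have h0: "h \<longlonglongrightarrow> 0" by (simp add: tendsto_rabs_zero_iff)
  have sub: "omega_limit (\<lambda>k. (xs k, ys k)) \<subseteq> crit H"
  proof
    fix p assume "p \<in> omega_limit (\<lambda>k. (xs k, ys k))"
    then obtain r where r: "strict_mono r" "((\<lambda>k. (xs k, ys k)) \<circ> r) \<longlonglongrightarrow> p"
      unfolding omega_limit_def by blast
    obtain xb yb where p: "p = (xb, yb)" by (cases p)
    have hx: "(\<lambda>n. xs (r n)) \<longlonglongrightarrow> xb" using tendsto_fst[OF r(2)] by (simp add: p o_def)
    have hy: "(\<lambda>n. ys (r n)) \<longlonglongrightarrow> yb" using tendsto_snd[OF r(2)] by (simp add: p o_def)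
    have g1: "(\<lambda>n. g (r n)) \<longlonglongrightarrow> dx H xb yb"
      unfolding g_def H_def by (rule dx_tendsto[OF N_pos hx hy])
    have M1: "(\<lambda>n. M (r n)) \<longlonglongrightarrow> dxx H xb yb"
      unfolding M_def H_def by (rule dxx_tendsto[OF N_pos hx hy])
    have hr: "(\<lambda>n. h (r n)) \<longlonglongrightarrow> 0" using LIMSEQ_subseq_LIMSEQ[OF h0 r(1)] by (simp add: o_def)
    have t1: "(\<lambda>n. M (r n) * h (r n)) \<longlonglongrightarrow> 0"
      using tendsto_mult[OF M1 hr] by simp
    have t2: "(\<lambda>n. L (ys (r n))/2 * h (r n) * \<bar>h (r n)\<bar>) \<longlonglongrightarrow> 0"
    proof (rule Lim_null_comparison)
      show "\<forall>\<^sub>F n in sequentially. norm (L (ys (r n))/2 * h (r n) * \<bar>h (r n)\<bar>) \<le> lp/2 * (h (r n) * h (r n))"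
      proof (intro always_eventually allI)
        fix n
        have "norm (L (ys (r n))/2 * h (r n) * \<bar>h (r n)\<bar>) = L (ys (r n))/2 * (h (r n) * h (r n))"
          using L_pos[of "ys (r n)"] by (simp add: abs_mult abs_mult_self_eq)
        also have "\<dots> \<le> lp/2 * (h (r n) * h (r n))"
          using Lb[of "r n"] by (intro mult_right_mono divide_right_mono) auto
        finally show "norm (L (ys (r n))/2 * h (r n) * \<bar>h (r n)\<bar>) \<le> lp/2 * (h (r n) * h (r n))" .
      qed
      show "(\<lambda>n. lp/2 * (h (r n) * h (r n))) \<longlonglongrightarrow> 0"
        using tendsto_mult[OF tendsto_const tendsto_mult[OF hr hr], of "lp/2"] by simp
    qed
    have "(\<lambda>n. - (M (r n) * h (r n)) - L (ys (r n))/2 * h (r n) * \<bar>h (r n)\<bar>) \<longlonglongrightarrow> - 0 - 0"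
      by (intro tendsto_diff tendsto_minus t1 t2)
    moreover have "(\<lambda>n. - (M (r n) * h (r n)) - L (ys (r n))/2 * h (r n) * \<bar>h (r n)\<bar>) = (\<lambda>n. g (r n))"
    proof
      fix n show "- (M (r n) * h (r n)) - L (ys (r n))/2 * h (r n) * \<bar>h (r n)\<bar> = g (r n)"
        using stat[of "r n"] by linarith
    qed
    ultimately have "(\<lambda>n. g (r n)) \<longlonglongrightarrow> 0" by simp
    then have dx0: "dx H xb yb = 0" using g1 LIMSEQ_unique by blast
    have ymin: "H xb yb \<le> H xb y" for y
    proof (rule tendsto_le[OF trivial_limit_sequentially])
      show "(\<lambda>n. H (xs (r n)) y) \<longlonglongrightarrow> H xb y" unfolding H_def by (rule Hobj_tendsto[OF N_pos hx tendsto_const])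
      show "(\<lambda>n. H (xs (r n)) (ys (r n))) \<longlonglongrightarrow> H xb yb" unfolding H_def by (rule Hobj_tendsto[OF N_pos hx hy])
      show "\<forall>\<^sub>F n in sequentially. H (xs (r n)) (ys (r n)) \<le> H (xs (r n)) y"
        unfolding eventually_sequentially
      proof (intro exI allI impI)
        fix n :: nat assume "1 \<le> n"
        then have "1 \<le> r n" using seq_suble[OF r(1), of n] by linarith
        then have "r n = Suc (r n - 1)" by simp
        then show "H (xs (r n)) (ys (r n)) \<le> H (xs (r n)) y" using step_y[of "r n - 1" y] by metis
      qed
    qed
    have dz: "deriv (\<lambda>s. H xb (yb + s *\<^sub>R v)) 0 = 0" for v
    proof -
      obtain D where D: "((\<lambda>s. Hobj N E xb (yb + s *\<^sub>R v)) has_real_derivative D) (at 0)"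
        using Hobj_ydir[OF N_pos] by blast
      have "D = 0"
        by (rule DERIV_local_min[OF D, of 1]) (use ymin in \<open>auto simp: H_def\<close>)
      then show ?thesis using DERIV_imp_deriv[OF D] by (simp add: H_def)
    qed
    have "wirtinger_grad (H xb) yb = 0"
      unfolding wirtinger_grad_def by (simp add: vec_eq_iff dz)
    then show "p \<in> crit H" unfolding crit_def p using dx0 by simp
  qed
  show ?thesis using omega_nonempty[OF bdd] sub omega_dist[OF bdd] by blast
qed


end
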